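(* Let $p\ge2$ and consider the dynamic panel logit AR($p$) model with $T=3$: $(Y^{(0)},X,A)$ has an arbitrary joint distribution with $Y^{(0)}=(Y_{1-p},\dots,Y_0)\in\{0,1\}^p$, $X=(X_1,X_2,X_3)\in\mathbb{R}^{K\times3}$, $A\in\mathbb{R}$, and conditionally on $(Y^{(0)},X,A)$ the outcomes $Y=(Y_1,Y_2,Y_3)$ satisfy, for $t\in\{1,2,3\}$, $$\Pr(Y_t=1\mid Y_{1-p},\dots,Y_{t-1},X,A)=\frac{\exp(X_t'\beta_0+\sum_{\ell=1}^pY_{t-\ell}\gamma_{0,\ell}+A)}{1+\exp(X_t'\beta_0+\sum_{\ell=1}^pY_{t-\ell}\gamma_{0,\ell}+A)},$$ with true parameters $\beta_0\in\mathbb{R}^K$, $\gamma_0=(\gamma_{0,1},\dots,\gamma_{0,p})\in\mathbb{R}^p$. Let $0_r,1_r$ be $r$-vectors of zeros and ones, $x_{ts}=x_t-x_s$, and for $y=(y_1,y_2,y_3)$ define $$m_{(0_p)}=\begin{cases}e^{x_{12}'\beta}&y=(0,1,0),\\ e^{x_{12}'\beta-\gamma_1}&y=(0,1,1),\\ -1&(y_1,y_2)=(1,0),\\0&\text{otherwise},\end{cases}\qquad m_{(0,1_{p-1})}=\begin{cases}-1&(y_1,y_2)=(0,1),\\ e^{x_{21}'\beta-\gamma_1+\gamma_p}&y=(1,0,0),\\ e^{x_{21}'\beta+\gamma_p}&y=(1,0,1),\\0&\text{otherwise},\end{cases}$$ $$m_{(1,0_{p-1})}=\begin{cases}e^{x_{12}'\beta+\gamma_p}&y=(0,1,0),\\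 e^{x_{12}'\beta-\gamma_1+\gamma_p}&y=(0,1,1),\\ -1&(y_1,y_2)=(1,0),\\0&\text{otherwise},\end{cases}\qquad m_{(1_p)}=\begin{cases}-1&(y_1,y_2)=(0,1),\\ e^{x_{21}'\beta-\gamma_1}&y=(1,0,0),\\ e^{x_{21}'\beta}&y=(1,0,1),\\0&\text{otherwise},\end{cases}$$ as functions of $(y,x,\beta,\gamma)$. For $k\in\{1,\dots,K\}$ let $\mathcal{X}_{k,+}=\{x\in\mathbb{R}^{K\times3}:x_{k,1}<x_{k,2}\}$, $\mathcal{X}_{k,-}=\{x\in\mathbb{R}^{K\times3}:x_{k,1}>x_{k,2}\}$ (with $x_{k,t}$ the $k$-th component of $x_t$), and for $s\in\{-,+\}^K$ let $\mathcal{X}_s=\bigcap_{k=1}^K\mathcal{X}_{k,s_k}$. (i) Let $y^{(0)}\in\{0_p,1_p\}$. Assume that for all $\epsilon>0$ and $s\in\{-,+\}^K$, $\Pr(Y^{(0)}=y^{(0)},X\in\mathcal{X}_s,\|X_2-X_3\|\le\epsilon)>0$, and that the expectations below are well-defined. Then $\mathbb{E}[m_{y^{(0)}}(Y,X,\beta,\gamma)\mid Y^{(0)}=y^{(0)},X\in\mathcal{X}_s,X_2=X_3]=0$ for all $s\in\{-,+\}^K$ if and only if $\beta=\beta_0$ and $\gamma_1=\gamma_{0,1}$. (ii) Let $y^{(0)}\in\{(0,1_{p-1}),(1,0_{p-1})\}$. Assume that for all $\epsilon>0$, $\Pr(Y^{(0)}=y^{(0)},\|X_2-X_3\|\le\epsilon)>0$,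 and that the expectation below is well-defined. Then $\mathbb{E}[m_{y^{(0)}}(Y,X,\beta_0,(\gamma_{0,1},\gamma_2,\dots,\gamma_p))\mid Y^{(0)}=y^{(0)},X_2=X_3]=0$ if and only if $\gamma_p=\gamma_{0,p}$.
   Context: Expectations are taken under the true data distribution (generated with $\beta_0,\gamma_0$), while moment functions are evaluated at candidate parameter values. The conditioning on $X_2=X_3$ is conditioning on the event that the second and third regressor vectors coincide. *)

theory Defs
  imports "HOL-Probability.Probability"
begin

text \<open>The four initial conditions Y0 = (Y_{1-p},...,Y_0) appearing in the theorem:
  Zeros = 0_p, ZeroOnes = (0,1_{p-1}), OneZeros = (1,0_{p-1}), Ones = 1_p.\<close>
datatype init = Zeros | ZeroOnes | OneZeros | Ones

definition init_val :: "nat \<Rightarrow> init \<Rightarrow> int \<Rightarrow> bool" where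
  "init_val p i t = (case i of Zeros \<Rightarrow> False | Ones \<Rightarrow> True
     | ZeroOnes \<Rightarrow> t \<noteq> 1 - int p | OneZeros \<Rightarrow> t = 1 - int p)"

text \<open>Regressors x = (x_1, x_2, x_3), each in R^K (K = CARD('k)).\<close>
type_synonym 'k regr = "(real^'k) \<times> (real^'k) \<times> (real^'k)"

definition xt :: "'k regr \<Rightarrow> int \<Rightarrow> real^'k" where
  "xt x t = (if t = 1 then fst x else if t = 2 then fst (snd x) else snd (snd x))"

definition path :: "nat \<Rightarrow> init \<Rightarrow> bool \<times> bool \<times> bool \<Rightarrow> int \<Rightarrow> bool" where
  "path p i y t = (if t = 1 then fst y else if t = 2 then fst (snd y)
     else if t = 3 then snd (snd y) else init_val p i t)"

definition logistic :: "real \<Rightarrow> real" where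
  "logistic u = exp u / (1 + exp u)"

text \<open>Pr(Y = y | Y0 = i, X = x, A = a) under the true parameters (beta0, gamma0)
  of the dynamic logit AR(p) model; gamma0 is indexed by 1..p.\<close>
definition outcome_prob ::
  "nat \<Rightarrow> real^'k \<Rightarrow> (nat \<Rightarrow> real) \<Rightarrow> init \<Rightarrow> 'k regr \<Rightarrow> real \<Rightarrow> bool \<times> bool \<times> bool \<Rightarrow> real" where
  "outcome_prob p \<beta>0 \<gamma>0 i x a y =
     (\<Prod>t\<in>{1..3::int}.
        let u = xt x t \<bullet> \<beta>0 + (\<Sum>l\<in>{1..p}. if path p i y (t - int l) then \<gamma>0 l else 0) + a
        in if path p i y t then logistic u else 1 - logistic u)"

definition m_zeros :: "nat \<Rightarrow> bool \<times> bool \<times> bool \<Rightarrow> 'k regr \<Rightarrow> real^'k \<Rightarrow> (nat \<Rightarrow> real) \<Rightarrow> real" where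
  "m_zeros p y x \<beta> \<gamma> = (let d = (fst x - fst (snd x)) \<bullet> \<beta> in
     if y = (False, True, False) then exp d
     else if y = (False, True, True) then exp (d - \<gamma> 1)
     else if fst y \<and> \<not> fst (snd y) then -1 else 0)"

definition m_zero_ones :: "nat \<Rightarrow> bool \<times> bool \<times> bool \<Rightarrow> 'k regr \<Rightarrow> real^'k \<Rightarrow> (nat \<Rightarrow> real) \<Rightarrow> real" where
  "m_zero_ones p y x \<beta> \<gamma> = (let d = (fst (snd x) - fst x) \<bullet> \<beta> in
     if \<not> fst y \<and> fst (snd y) then -1
     else if y = (True, False, False) then exp (d - \<gamma> 1 + \<gamma> p)
     else if y = (True, False, True) then exp (d + \<gamma> p)
     else 0)"

definition m_one_zeros :: "nat \<Rightarrow> bool \<times> bool \<times> bool \<Rightarrow> 'k regr \<Rightarrow> real^'k \<Rightarrow> (nat \<Rightarrow> real) \<Rightarrow> real" where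
  "m_one_zeros p y x \<beta> \<gamma> = (let d = (fst x - fst (snd x)) \<bullet> \<beta> in
     if y = (False, True, False) then exp (d + \<gamma> p)
     else if y = (False, True, True) then exp (d - \<gamma> 1 + \<gamma> p)
     else if fst y \<and> \<not> fst (snd y) then -1 else 0)"

definition m_ones :: "nat \<Rightarrow> bool \<times> bool \<times> bool \<Rightarrow> 'k regr \<Rightarrow> real^'k \<Rightarrow> (nat \<Rightarrow> real) \<Rightarrow> real" where
  "m_ones p y x \<beta> \<gamma> = (let d = (fst (snd x) - fst x) \<bullet> \<beta> in
     if \<not> fst y \<and> fst (snd y) then -1
     else if y = (True, False, False) then exp (d - \<gamma> 1)
     else if y = (True, False, True) then exp d
     else 0)"

definition moment :: "nat \<Rightarrow> init \<Rightarrow> bool \<times> bool \<times> bool \<Rightarrow> 'k regr \<Rightarrow> real^'k \<Rightarrow> (nat \<Rightarrow> real) \<Rightarrow> real" where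
  "moment p i = (case i of Zeros \<Rightarrow> m_zeros p | ZeroOnes \<Rightarrow> m_zero_ones p
     | OneZeros \<Rightarrow> m_one_zeros p | Ones \<Rightarrow> m_ones p)"

definition cond_moment ::
  "nat \<Rightarrow> real^'k \<Rightarrow> (nat \<Rightarrow> real) \<Rightarrow> init \<Rightarrow> real^'k \<Rightarrow> (nat \<Rightarrow> real) \<Rightarrow> 'k regr \<times> real \<Rightarrow> real" where
  "cond_moment p \<beta>0 \<gamma>0 i \<beta> \<gamma> z =
     (\<Sum>y\<in>UNIV. moment p i y (fst z) \<beta> \<gamma> * outcome_prob p \<beta>0 \<gamma>0 i (fst z) (snd z) y)"

text \<open>X_s for a sign vector s (True = +, False = -).\<close>
definition sign_region :: "('k::finite \<Rightarrow> bool) \<Rightarrow> 'k regr set" where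
  "sign_region s = {x. \<forall>k. if s k then fst x $ k < fst (snd x) $ k else fst x $ k > fst (snd x) $ k}"

definition cond_exp :: "('a \<times> real) measure \<Rightarrow> ('a \<times> real) set \<Rightarrow> ('a \<times> real \<Rightarrow> real) \<Rightarrow> real" where
  "cond_exp \<nu> S f = (LINT z:S|\<nu>. f z) / measure \<nu> S"

end

theory Submission
  imports Defs
begin

lemma sumU: "(\<Sum>y\<in>(UNIV::(bool\<times>bool\<times>bool) set). (f y::real)) =
  f (False,False,False) + f (False,False,True) + f (False,True,False) + f (False,True,True) +
  f (True,False,False) + f (True,False,True) + f (True,True,False) + f (True,True,True)"
  by (simp add: UNIV_Times_UNIV[symmetric] sum.cartesian_product[symmetric] UNIV_bool del: UNIV_Times_UNIV)
lemma sum12: "p \<ge> 2 \<Longrightarrow> (\<Sum>l\<in>{1..p::nat}. (f l::real)) = f 1 + f 2 + (\<Sum>l\<in>{3..p}. f l)"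
proof -
  assume "p \<ge> 2"
  then have "{1..p} = insert 1 (insert 2 {3..p})" by auto
  then show ?thesis by simp
qed

lemma sumpath:
  assumes "p \<ge> 2" "t \<in> {1,2,3::int}"
  shows "(\<Sum>l\<in>{1..p}. if path p i y (t - int l) then \<gamma> l else 0) =
    (if path p i y (t-1) then \<gamma> 1 else 0) + (if path p i y (t-2) then \<gamma> 2 else 0)
    + (\<Sum>l\<in>{3..p}. if init_val p i (t - int l) then \<gamma> l else (0::real))"
proof -
  have "(\<Sum>l\<in>{3..p}. if path p i y (t - int l) then \<gamma> l else 0) = 
     (\<Sum>l\<in>{3..p}. if init_val p i (t - int l) then \<gamma> l else (0::real))"
    by (rule sum.cong) (use assms in \<open>auto simp: path_def\<close>)
  then show ?thesis using sum12[OF assms(1), of "\<lambda>l. if path p i y (t - int l) then \<gamma> l else 0"] by simp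
qed

lemma init_sums:
  assumes "p \<ge> 2" "t \<in> {1,2,3::int}"
  shows "(\<Sum>l\<in>{3..p}. if init_val p Zeros (t - int l) then \<gamma> l else (0::real)) = 0"
   "(\<Sum>l\<in>{3..p}. if init_val p Ones (t - int l) then \<gamma> l else (0::real)) = (\<Sum>l\<in>{3..p}. \<gamma> l)"
   "t \<noteq> 1 \<Longrightarrow> (\<Sum>l\<in>{3..p}. if init_val p OneZeros (t - int l) then \<gamma> l else (0::real)) = 0"
   "t \<noteq> 1 \<Longrightarrow> (\<Sum>l\<in>{3..p}. if init_val p ZeroOnes (t - int l) then \<gamma> l else (0::real)) = (\<Sum>l\<in>{3..p}. \<gamma> l)"
   "(\<Sum>l\<in>{3..p}. if init_val p OneZeros (1 - int l) then \<gamma> l else (0::real)) = (if p \<ge> 3 then \<gamma> p else 0)"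
   "(\<Sum>l\<in>{3..p}. if init_val p ZeroOnes (1 - int l) then \<gamma> l else (0::real)) = (\<Sum>l\<in>{3..p}. \<gamma> l) - (if p \<ge> 3 then \<gamma> p else 0)"
proof -
  show "(\<Sum>l\<in>{3..p}. if init_val p Zeros (t - int l) then \<gamma> l else (0::real)) = 0"
    by (simp add: init_val_def)
  show "(\<Sum>l\<in>{3..p}. if init_val p Ones (t - int l) then \<gamma> l else (0::real)) = (\<Sum>l\<in>{3..p}. \<gamma> l)"
    by (simp add: init_val_def)
  show "t \<noteq> 1 \<Longrightarrow> (\<Sum>l\<in>{3..p}. if init_val p OneZeros (t - int l) then \<gamma> l else (0::real)) = 0"
    by (rule sum.neutral) (use assms in \<open>auto simp: init_val_def\<close>)
  show "t \<noteq> 1 \<Longrightarrow> (\<Sum>l\<in>{3..p}. if init_val p ZeroOnes (t - int l) then \<gamma> l else (0::real)) = (\<Sum>l\<in>{3..p}. \<gamma> l)"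
    by (rule sum.cong) (use assms in \<open>auto simp: init_val_def\<close>)
  have e1: "(\<Sum>l\<in>{3..p}. if init_val p OneZeros (1 - int l) then \<gamma> l else (0::real)) = (\<Sum>l\<in>{3..p}. if l = p then \<gamma> l else 0)"
    by (rule sum.cong) (auto simp: init_val_def)
  show "(\<Sum>l\<in>{3..p}. if init_val p OneZeros (1 - int l) then \<gamma> l else (0::real)) = (if p \<ge> 3 then \<gamma> p else 0)"
    unfolding e1 by (simp add: sum.delta')
  have e2: "(\<Sum>l\<in>{3..p}. if init_val p ZeroOnes (1 - int l) then \<gamma> l else (0::real)) = (\<Sum>l\<in>{3..p}. \<gamma> l - (if l = p then \<gamma> l else 0))"
    by (rule sum.cong) (auto simp: init_val_def)
  show "(\<Sum>l\<in>{3..p}. if init_val p ZeroOnes (1 - int l) then \<gamma> l else (0::real)) = (\<Sum>l\<in>{3..p}. \<gamma> l) - (if p \<ge> 3 then \<gamma> p else 0)"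
    unfolding e2 sum_subtractf by (simp add: sum.delta')
qed

definition OP :: "real \<Rightarrow> real \<Rightarrow> real \<Rightarrow> real \<Rightarrow> real \<Rightarrow> real \<Rightarrow> real \<Rightarrow> real \<Rightarrow> bool \<times> bool \<times> bool \<Rightarrow> real" where
 "OP b1 c2 c3 P1 P2 P3 g1 g2 y = 
   (if fst y then logistic (b1 + P1) else 1 - logistic (b1 + P1)) *
   (if fst (snd y) then logistic (c2 + (if fst y then g1 else 0) + P2) else 1 - logistic (c2 + (if fst y then g1 else 0) + P2)) *
   (if snd (snd y) then logistic (c3 + (if fst (snd y) then g1 else 0) + (if fst y then g2 else 0) + P3)
     else 1 - logistic (c3 + (if fst (snd y) then g1 else 0) + (if fst y then g2 else 0) + P3))"

lemma int123: "{1..3::int} = {1,2,3}" by auto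

lemma op_gen:
  assumes "p \<ge> 2"
  shows "outcome_prob p \<beta>0 \<gamma>0 i x a y =
   (\<Prod>t\<in>{1,2,3::int}.
        let u = xt x t \<bullet> \<beta>0 + ((if path p i y (t-1) then \<gamma>0 1 else 0) + (if path p i y (t-2) then \<gamma>0 2 else 0)
    + (\<Sum>l\<in>{3..p}. if init_val p i (t - int l) then \<gamma>0 l else (0::real))) + a
        in if path p i y t then logistic u else 1 - logistic u)"
  unfolding outcome_prob_def int123
  by (rule prod.cong[OF refl]) (simp only: sumpath[OF assms])

lemma op_gen2:
  assumes "p \<ge> 2"
  shows "outcome_prob p \<beta>0 \<gamma>0 i x a y =
  OP (fst x \<bullet> \<beta>0 + a) (fst (snd x) \<bullet> \<beta>0 + a) (snd (snd x) \<bullet> \<beta>0 + a)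
   (\<Sum>l\<in>{1..p}. if init_val p i (1 - int l) then \<gamma>0 l else 0)
   (\<Sum>l\<in>{2..p}. if init_val p i (2 - int l) then \<gamma>0 l else 0)
   (\<Sum>l\<in>{3..p}. if init_val p i (3 - int l) then \<gamma>0 l else 0) (\<gamma>0 1) (\<gamma>0 2) y"
proof -
  have e1: "(\<Sum>l\<in>{1..p}. if init_val p i (1 - int l) then \<gamma>0 l else 0) =
     (if init_val p i 0 then \<gamma>0 1 else 0) + (if init_val p i (-1) then \<gamma>0 2 else 0) + 
     (\<Sum>l\<in>{3..p}. if init_val p i (1 - int l) then \<gamma>0 l else 0)"
    using sum12[OF assms, of "\<lambda>l. if init_val p i (1 - int l) then \<gamma>0 l else 0"] by simp
  have "{2..p} = insert 2 {3..p}" using assms by auto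
  then have e2: "(\<Sum>l\<in>{2..p}. if init_val p i (2 - int l) then \<gamma>0 l else 0) =
     (if init_val p i 0 then \<gamma>0 2 else 0) + 
     (\<Sum>l\<in>{3..p}. if init_val p i (2 - int l) then \<gamma>0 l else 0)" by simp
  show ?thesis unfolding op_gen[OF assms] e1 e2
    by (simp add: OP_def xt_def path_def algebra_simps)
qed

lemma A_Zeros: "(\<Sum>l\<in>{j..p}. if init_val p Zeros (t - int l) then \<gamma>0 l else (0::real)) = 0"
  by (simp add: init_val_def)
lemma A_Ones: "(\<Sum>l\<in>{j..p}. if init_val p Ones (t - int l) then \<gamma>0 l else (0::real)) = sum \<gamma>0 {j..p}"
  by (simp add: init_val_def)
lemma A_OneZeros: "p \<ge> 1 \<Longrightarrow> (\<Sum>l\<in>{1..p}. if init_val p OneZeros (1 - int l) then \<gamma>0 l else (0::real)) = \<gamma>0 p"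
  "(\<Sum>l\<in>{2..p}. if init_val p OneZeros (2 - int l) then \<gamma>0 l else (0::real)) = 0"
  "(\<Sum>l\<in>{3..p}. if init_val p OneZeros (3 - int l) then \<gamma>0 l else (0::real)) = 0"
proof -
  assume "p \<ge> 1"
  have "(\<Sum>l\<in>{1..p}. if init_val p OneZeros (1 - int l) then \<gamma>0 l else (0::real)) = (\<Sum>l\<in>{1..p}. if l = p then \<gamma>0 l else (0::real))"
    by (rule sum.cong) (auto simp: init_val_def)
  then show "(\<Sum>l\<in>{1..p}. if init_val p OneZeros (1 - int l) then \<gamma>0 l else (0::real)) = \<gamma>0 p"
    using \<open>p \<ge> 1\<close> by simp
next
  show "(\<Sum>l\<in>{2..p}. if init_val p OneZeros (2 - int l) then \<gamma>0 l else (0::real)) = 0"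
    by (rule sum.neutral) (auto simp: init_val_def)
  show "(\<Sum>l\<in>{3..p}. if init_val p OneZeros (3 - int l) then \<gamma>0 l else (0::real)) = 0"
    by (rule sum.neutral) (auto simp: init_val_def)
qed
lemma A_ZeroOnes: "p \<ge> 1 \<Longrightarrow> (\<Sum>l\<in>{1..p}. if init_val p ZeroOnes (1 - int l) then \<gamma>0 l else (0::real)) = sum \<gamma>0 {1..p} - \<gamma>0 p"
  "(\<Sum>l\<in>{2..p}. if init_val p ZeroOnes (2 - int l) then \<gamma>0 l else (0::real)) = sum \<gamma>0 {2..p}"
  "(\<Sum>l\<in>{3..p}. if init_val p ZeroOnes (3 - int l) then \<gamma>0 l else (0::real)) = sum \<gamma>0 {3..p}"
proof -
  assume "p \<ge> 1"
  have "(\<Sum>l\<in>{1..p}. if init_val p ZeroOnes (1 - int l) then \<gamma>0 l else (0::real)) = (\<Sum>l\<in>{1..p}. \<gamma>0 l - (if l = p then \<gamma>0 l else (0::real)))"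
    by (rule sum.cong) (auto simp: init_val_def)
  then show "(\<Sum>l\<in>{1..p}. if init_val p ZeroOnes (1 - int l) then \<gamma>0 l else (0::real)) = sum \<gamma>0 {1..p} - \<gamma>0 p"
    using \<open>p \<ge> 1\<close> by (simp add: sum_subtractf)
next
  show "(\<Sum>l\<in>{2..p}. if init_val p ZeroOnes (2 - int l) then \<gamma>0 l else (0::real)) = sum \<gamma>0 {2..p}"
    by (rule sum.cong) (auto simp: init_val_def)
  show "(\<Sum>l\<in>{3..p}. if init_val p ZeroOnes (3 - int l) then \<gamma>0 l else (0::real)) = sum \<gamma>0 {3..p}"
    by (rule sum.cong) (auto simp: init_val_def)
qed
definition lc :: "real \<Rightarrow> real" where "lc u = inverse (1 + exp u)"

lemma lc_pos: "lc u > 0" unfolding lc_def using exp_gt_zero[of u] by (intro positive_imp_inverse_positive) linarith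
lemma lc_rel: "lc u + exp u * lc u = 1"
proof -
  have "1 + exp u \<noteq> 0" using exp_gt_zero[of u] by linarith
  then show ?thesis unfolding lc_def by (simp add: field_simps)
qed
lemma logi2: "(if P then logistic u else 1 - logistic u) = (if P then exp u * lc u else lc u)"
proof -
  have "1 + exp u \<noteq> 0" using exp_gt_zero[of u] by linarith
  then show ?thesis unfolding lc_def logistic_def by (simp add: field_simps)
qed

lemma OP_alt: "OP b1 c2 c3 P1 P2 P3 g1 g2 y = 
   (if fst y then exp (b1 + P1) * lc (b1 + P1) else lc (b1 + P1)) *
   (if fst (snd y) then exp (c2 + (if fst y then g1 else 0) + P2) * lc (c2 + (if fst y then g1 else 0) + P2) else lc (c2 + (if fst y then g1 else 0) + P2)) *
   (if snd (snd y) then exp (c3 + (if fst (snd y) then g1 else 0) + (if fst y then g2 else 0) + P3) * lc (c3 + (if fst (snd y) then g1 else 0) + (if fst y then g2 else 0) + P3)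
     else lc (c3 + (if fst (snd y) then g1 else 0) + (if fst y then g2 else 0) + P3))"
  unfolding OP_def logi2 ..

lemma alg_Zeros:
  fixes b c g1 g2 D r :: real
  shows "exp (D + b - c) * OP b c c 0 0 0 g1 g2 (False,True,False)
    + exp (D + b - c - r) * OP b c c 0 0 0 g1 g2 (False,True,True)
    - OP b c c 0 0 0 g1 g2 (True,False,False) - OP b c c 0 0 0 g1 g2 (True,False,True)
   = exp b * lc b * lc c * lc (c + g1) *
     (exp D * (exp (c + g1) * exp (- r) + 1) - (exp (c + g1) * exp (- g1) + 1))"
proof -
  have f: "exp (D + b - c) * exp c = exp D * exp b" "exp (D + b - c - r) * exp c = exp D * exp b * exp (-r)"
    "exp (c + g1) * exp (-g1) = exp c"
    by (simp_all add: exp_add exp_diff exp_minus field_simps)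
  show ?thesis
    unfolding OP_alt fst_conv snd_conv if_True if_False add_0_right
    using f lc_rel[of c] lc_rel[of "c+g2"]
    by algebra
qed

lemma alg_Ones:
  fixes b c g1 g2 D r P1 P2 P3 :: real
  assumes "P1 = g1 + P2" "P2 = g2 + P3"
  shows "- OP b c c P1 P2 P3 g1 g2 (False,True,False) - OP b c c P1 P2 P3 g1 g2 (False,True,True)
    + exp (D + c - b - r) * OP b c c P1 P2 P3 g1 g2 (True,False,False)
    + exp (D + c - b) * OP b c c P1 P2 P3 g1 g2 (True,False,True)
   = exp (c + P1) * lc (b + P1) * lc (c + P2) * lc (c + P1) *
     (exp D * (exp (- r) + exp (c + P2)) - (exp (- g1) + exp (c + P2)))"
proof -
  have f: "exp (b + P1) * exp (D + c - b) = exp D * exp (c + P1)" "exp (D + c - b - r) = exp (D + c - b) * exp (-r)"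
    "exp (c + P1) * exp (-g1) = exp (c + P2)" "c + g1 + P2 = c + P1" "c + g2 + P3 = c + P2"
    using assms by (simp_all add: exp_add exp_diff exp_minus field_simps)
  show ?thesis
    unfolding OP_alt fst_conv snd_conv if_True if_False add_0_right f
    using f(1-3) lc_rel[of "c+P1"] lc_rel[of "c+g1+P3"]
    by algebra
qed

lemma alg_ZeroOnes:
  fixes b c g1 g2 q gp P1 P2 P3 :: real
  assumes "P1 = g1 + P2" "P2 = g2 + P3"
  shows "- OP b c c (P1 - q) P2 P3 g1 g2 (False,True,False) - OP b c c (P1 - q) P2 P3 g1 g2 (False,True,True)
    + exp (c - b - g1 + gp) * OP b c c (P1 - q) P2 P3 g1 g2 (True,False,False)
    + exp (c - b + gp) * OP b c c (P1 - q) P2 P3 g1 g2 (True,False,True)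
   = exp (c + P2) * lc (b + (P1 - q)) * lc (c + P2) * (exp (gp - q) - 1)"
proof -
  have f: "exp (b + (P1 - q)) * exp (c - b + gp) = exp (c + P1) * exp (gp - q)" "exp (c - b - g1 + gp) = exp (c - b + gp) * exp (-g1)"
    "exp (c + P1) * exp (-g1) = exp (c + P2)" "c + g1 + P2 = c + P1" "c + g2 + P3 = c + P2"
    using assms by (simp_all add: exp_add exp_diff exp_minus field_simps)
  show ?thesis
    unfolding OP_alt fst_conv snd_conv if_True if_False add_0_right f
    using f(1-3) lc_rel[of "c+P1"] lc_rel[of "c+g1+P3"]
    by algebra
qed

lemma alg_OneZeros:
  fixes b c g1 g2 q gp :: real
  shows "exp (b - c + gp) * OP b c c q 0 0 g1 g2 (False,True,False)
    + exp (b - c - g1 + gp) * OP b c c q 0 0 g1 g2 (False,True,True)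
    - OP b c c q 0 0 g1 g2 (True,False,False) - OP b c c q 0 0 g1 g2 (True,False,True)
   = exp (b + q) * lc (b + q) * lc (c + g1) * (exp (gp - q) - 1)"
proof -
  have f: "exp (b - c + gp) * exp c = exp (b + q) * exp (gp - q)" "exp (b - c - g1 + gp) = exp (b - c + gp) * exp (-g1)"
    "exp (c + g1) * exp (-g1) = exp c"
    by (simp_all add: exp_add exp_diff exp_minus field_simps)
  show ?thesis
    unfolding OP_alt fst_conv snd_conv if_True if_False add_0_right
    using f lc_rel[of c] lc_rel[of "c+g2"]
    by algebra
qed
lemma sum_1p: "p \<ge> 1 \<Longrightarrow> sum (\<gamma>::nat\<Rightarrow>real) {1..p} = \<gamma> 1 + sum \<gamma> {2..p}"
proof -
  assume "p \<ge> 1" then have "{1..p} = insert 1 {2..p}" by auto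
  then show ?thesis by simp
qed
lemma sum_2p: "p \<ge> 2 \<Longrightarrow> sum (\<gamma>::nat\<Rightarrow>real) {2..p} = \<gamma> 2 + sum \<gamma> {3..p}"
proof -
  assume "p \<ge> 2" then have "{2..p} = insert 2 {3..p}" by auto
  then show ?thesis by simp
qed

lemma cm_Zeros:
  assumes "p \<ge> 2"
  shows "cond_moment p \<beta>0 \<gamma>0 Zeros \<beta> \<gamma> ((x1, x2, x2), a) =
   exp (x1 \<bullet> \<beta>0 + a) * lc (x1 \<bullet> \<beta>0 + a) * lc (x2 \<bullet> \<beta>0 + a) * lc (x2 \<bullet> \<beta>0 + a + \<gamma>0 1) *
     (exp ((x1 - x2) \<bullet> (\<beta> - \<beta>0)) * (exp (x2 \<bullet> \<beta>0 + a + \<gamma>0 1) * exp (- \<gamma> 1) + 1)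
       - (exp (x2 \<bullet> \<beta>0 + a + \<gamma>0 1) * exp (- \<gamma>0 1) + 1))"
proof -
  have d: "(x1 - x2) \<bullet> \<beta> = (x1 - x2) \<bullet> (\<beta> - \<beta>0) + (x1 \<bullet> \<beta>0 + a) - (x2 \<bullet> \<beta>0 + a)"
    by (simp add: inner_diff_left inner_diff_right)
  have o: "outcome_prob p \<beta>0 \<gamma>0 Zeros (x1, x2, x2) a = OP (x1 \<bullet> \<beta>0 + a) (x2 \<bullet> \<beta>0 + a) (x2 \<bullet> \<beta>0 + a)
     0 0 0 (\<gamma>0 1) (\<gamma>0 2)" for a
    by (rule ext) (simp add: op_gen2[OF assms] A_Zeros)
  have A: "exp ((x1 - x2) \<bullet> (\<beta> - \<beta>0) + (x1 \<bullet> \<beta>0 + a) - (x2 \<bullet> \<beta>0 + a)) * OP (x1 \<bullet> \<beta>0 + a) (x2 \<bullet> \<beta>0 + a) (x2 \<bullet> \<beta>0 + a) 0 0 0 (\<gamma>0 1) (\<gamma>0 2) (False,True,False)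
    + exp ((x1 - x2) \<bullet> (\<beta> - \<beta>0) + (x1 \<bullet> \<beta>0 + a) - (x2 \<bullet> \<beta>0 + a) - \<gamma> 1) * OP (x1 \<bullet> \<beta>0 + a) (x2 \<bullet> \<beta>0 + a) (x2 \<bullet> \<beta>0 + a) 0 0 0 (\<gamma>0 1) (\<gamma>0 2) (False,True,True)
    - OP (x1 \<bullet> \<beta>0 + a) (x2 \<bullet> \<beta>0 + a) (x2 \<bullet> \<beta>0 + a) 0 0 0 (\<gamma>0 1) (\<gamma>0 2) (True,False,False) - OP (x1 \<bullet> \<beta>0 + a) (x2 \<bullet> \<beta>0 + a) (x2 \<bullet> \<beta>0 + a) 0 0 0 (\<gamma>0 1) (\<gamma>0 2) (True,False,True)
   = exp (x1 \<bullet> \<beta>0 + a) * lc (x1 \<bullet> \<beta>0 + a) * lc (x2 \<bullet> \<beta>0 + a) * lc (x2 \<bullet> \<beta>0 + a + \<gamma>0 1) *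
     (exp ((x1 - x2) \<bullet> (\<beta> - \<beta>0)) * (exp (x2 \<bullet> \<beta>0 + a + \<gamma>0 1) * exp (- \<gamma> 1) + 1)
       - (exp (x2 \<bullet> \<beta>0 + a + \<gamma>0 1) * exp (- \<gamma>0 1) + 1))"
    by (rule alg_Zeros)
  have B: "cond_moment p \<beta>0 \<gamma>0 Zeros \<beta> \<gamma> ((x1, x2, x2), a) = exp ((x1 - x2) \<bullet> (\<beta> - \<beta>0) + (x1 \<bullet> \<beta>0 + a) - (x2 \<bullet> \<beta>0 + a)) * OP (x1 \<bullet> \<beta>0 + a) (x2 \<bullet> \<beta>0 + a) (x2 \<bullet> \<beta>0 + a) 0 0 0 (\<gamma>0 1) (\<gamma>0 2) (False,True,False)
    + exp ((x1 - x2) \<bullet> (\<beta> - \<beta>0) + (x1 \<bullet> \<beta>0 + a) - (x2 \<bullet> \<beta>0 + a) - \<gamma> 1) * OP (x1 \<bullet> \<beta>0 + a) (x2 \<bullet> \<beta>0 + a) (x2 \<bullet> \<beta>0 + a) 0 0 0 (\<gamma>0 1) (\<gamma>0 2) (False,True,True)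
    - OP (x1 \<bullet> \<beta>0 + a) (x2 \<bullet> \<beta>0 + a) (x2 \<bullet> \<beta>0 + a) 0 0 0 (\<gamma>0 1) (\<gamma>0 2) (True,False,False) - OP (x1 \<bullet> \<beta>0 + a) (x2 \<bullet> \<beta>0 + a) (x2 \<bullet> \<beta>0 + a) 0 0 0 (\<gamma>0 1) (\<gamma>0 2) (True,False,True)"
    unfolding cond_moment_def sumU moment_def init.case m_zeros_def fst_conv snd_conv o Let_def d
    by (simp only: prod.inject simp_thms if_True if_False)
  show ?thesis using A B by simp
qed

lemma cm_Ones:
  assumes "p \<ge> 2"
  shows "cond_moment p \<beta>0 \<gamma>0 Ones \<beta> \<gamma> ((x1, x2, x2), a) =
   exp (x2 \<bullet> \<beta>0 + a + sum \<gamma>0 {1..p}) * lc (x1 \<bullet> \<beta>0 + a + sum \<gamma>0 {1..p}) * lc (x2 \<bullet> \<beta>0 + a + sum \<gamma>0 {2..p})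
    * lc (x2 \<bullet> \<beta>0 + a + sum \<gamma>0 {1..p}) *
     (exp ((x2 - x1) \<bullet> (\<beta> - \<beta>0)) * (exp (- \<gamma> 1) + exp (x2 \<bullet> \<beta>0 + a + sum \<gamma>0 {2..p}))
       - (exp (- \<gamma>0 1) + exp (x2 \<bullet> \<beta>0 + a + sum \<gamma>0 {2..p})))"
proof -
  have d: "(x2 - x1) \<bullet> \<beta> = (x2 - x1) \<bullet> (\<beta> - \<beta>0) + (x2 \<bullet> \<beta>0 + a) - (x1 \<bullet> \<beta>0 + a)"
    by (simp add: inner_diff_left inner_diff_right)
  have r1: "sum \<gamma>0 {1..p} = \<gamma>0 1 + sum \<gamma>0 {2..p}" "sum \<gamma>0 {2..p} = \<gamma>0 2 + sum \<gamma>0 {3..p}"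
    using assms sum_1p sum_2p by auto
  have o: "outcome_prob p \<beta>0 \<gamma>0 Ones (x1, x2, x2) a = OP (x1 \<bullet> \<beta>0 + a) (x2 \<bullet> \<beta>0 + a) (x2 \<bullet> \<beta>0 + a)
     (sum \<gamma>0 {1..p}) (sum \<gamma>0 {2..p}) (sum \<gamma>0 {3..p}) (\<gamma>0 1) (\<gamma>0 2)" for a
    by (rule ext) (simp add: op_gen2[OF assms] A_Ones)
  have A: "- OP (x1 \<bullet> \<beta>0 + a) (x2 \<bullet> \<beta>0 + a) (x2 \<bullet> \<beta>0 + a) (sum \<gamma>0 {1..p}) (sum \<gamma>0 {2..p}) (sum \<gamma>0 {3..p}) (\<gamma>0 1) (\<gamma>0 2) (False,True,False) - OP (x1 \<bullet> \<beta>0 + a) (x2 \<bullet> \<beta>0 + a) (x2 \<bullet> \<beta>0 + a) (sum \<gamma>0 {1..p}) (sum \<gamma>0 {2..p}) (sum \<gamma>0 {3..p}) (\<gamma>0 1) (\<gamma>0 2) (False,True,True)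
    + exp (((x2 - x1) \<bullet> (\<beta> - \<beta>0)) + (x2 \<bullet> \<beta>0 + a) - (x1 \<bullet> \<beta>0 + a) - \<gamma> 1) * OP (x1 \<bullet> \<beta>0 + a) (x2 \<bullet> \<beta>0 + a) (x2 \<bullet> \<beta>0 + a) (sum \<gamma>0 {1..p}) (sum \<gamma>0 {2..p}) (sum \<gamma>0 {3..p}) (\<gamma>0 1) (\<gamma>0 2) (True,False,False)
    + exp (((x2 - x1) \<bullet> (\<beta> - \<beta>0)) + (x2 \<bullet> \<beta>0 + a) - (x1 \<bullet> \<beta>0 + a)) * OP (x1 \<bullet> \<beta>0 + a) (x2 \<bullet> \<beta>0 + a) (x2 \<bullet> \<beta>0 + a) (sum \<gamma>0 {1..p}) (sum \<gamma>0 {2..p}) (sum \<gamma>0 {3..p}) (\<gamma>0 1) (\<gamma>0 2) (True,False,True)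
   = exp (x2 \<bullet> \<beta>0 + a + sum \<gamma>0 {1..p}) * lc (x1 \<bullet> \<beta>0 + a + sum \<gamma>0 {1..p}) * lc (x2 \<bullet> \<beta>0 + a + sum \<gamma>0 {2..p})
    * lc (x2 \<bullet> \<beta>0 + a + sum \<gamma>0 {1..p}) *
     (exp ((x2 - x1) \<bullet> (\<beta> - \<beta>0)) * (exp (- \<gamma> 1) + exp (x2 \<bullet> \<beta>0 + a + sum \<gamma>0 {2..p}))
       - (exp (- \<gamma>0 1) + exp (x2 \<bullet> \<beta>0 + a + sum \<gamma>0 {2..p})))"
    by (rule alg_Ones[OF r1])
  have B: "cond_moment p \<beta>0 \<gamma>0 Ones \<beta> \<gamma> ((x1, x2, x2), a) = - OP (x1 \<bullet> \<beta>0 + a) (x2 \<bullet> \<beta>0 + a) (x2 \<bullet> \<beta>0 + a) (sum \<gamma>0 {1..p}) (sum \<gamma>0 {2..p}) (sum \<gamma>0 {3..p}) (\<gamma>0 1) (\<gamma>0 2) (False,True,False) - OP (x1 \<bullet> \<beta>0 + a) (x2 \<bullet> \<beta>0 + a) (x2 \<bullet> \<beta>0 + a) (sum \<gamma>0 {1..p}) (sum \<gamma>0 {2..p}) (sum \<gamma>0 {3..p}) (\<gamma>0 1) (\<gamma>0 2) (False,True,True)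
    + exp (((x2 - x1) \<bullet> (\<beta> - \<beta>0)) + (x2 \<bullet> \<beta>0 + a) - (x1 \<bullet> \<beta>0 + a) - \<gamma> 1) * OP (x1 \<bullet> \<beta>0 + a) (x2 \<bullet> \<beta>0 + a) (x2 \<bullet> \<beta>0 + a) (sum \<gamma>0 {1..p}) (sum \<gamma>0 {2..p}) (sum \<gamma>0 {3..p}) (\<gamma>0 1) (\<gamma>0 2) (True,False,False)
    + exp (((x2 - x1) \<bullet> (\<beta> - \<beta>0)) + (x2 \<bullet> \<beta>0 + a) - (x1 \<bullet> \<beta>0 + a)) * OP (x1 \<bullet> \<beta>0 + a) (x2 \<bullet> \<beta>0 + a) (x2 \<bullet> \<beta>0 + a) (sum \<gamma>0 {1..p}) (sum \<gamma>0 {2..p}) (sum \<gamma>0 {3..p}) (\<gamma>0 1) (\<gamma>0 2) (True,False,True)"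
    unfolding cond_moment_def sumU moment_def init.case m_ones_def fst_conv snd_conv o Let_def d
    by (simp only: prod.inject simp_thms if_True if_False mult_zero_left mult_1_left add_0_right add_0_left mult_minus1 diff_conv_add_uminus add.assoc)
  show ?thesis using A B by simp
qed
lemma cm_ZeroOnes:
  assumes "p \<ge> 2"
  shows "cond_moment p \<beta>0 \<gamma>0 ZeroOnes \<beta>0 (\<gamma>(1 := \<gamma>0 1)) ((x1, x2, x2), a) =
    exp (x2 \<bullet> \<beta>0 + a + sum \<gamma>0 {2..p}) * lc (x1 \<bullet> \<beta>0 + a + (sum \<gamma>0 {1..p} - \<gamma>0 p)) * lc (x2 \<bullet> \<beta>0 + a + sum \<gamma>0 {2..p})
     * (exp (\<gamma> p - \<gamma>0 p) - 1)"
proof -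
  have d: "(x2 - x1) \<bullet> \<beta>0 = (x2 \<bullet> \<beta>0 + a) - (x1 \<bullet> \<beta>0 + a)"
    by (simp add: inner_diff_left)
  have g: "(\<gamma>(1 := \<gamma>0 1)) 1 = \<gamma>0 1" "(\<gamma>(1 := \<gamma>0 1)) p = \<gamma> p" using assms by auto
  have r1: "sum \<gamma>0 {1..p} = \<gamma>0 1 + sum \<gamma>0 {2..p}" "sum \<gamma>0 {2..p} = \<gamma>0 2 + sum \<gamma>0 {3..p}"
    using assms sum_1p sum_2p by auto
  have o: "outcome_prob p \<beta>0 \<gamma>0 ZeroOnes (x1, x2, x2) a = OP (x1 \<bullet> \<beta>0 + a) (x2 \<bullet> \<beta>0 + a) (x2 \<bullet> \<beta>0 + a)
     (sum \<gamma>0 {1..p} - \<gamma>0 p) (sum \<gamma>0 {2..p}) (sum \<gamma>0 {3..p}) (\<gamma>0 1) (\<gamma>0 2)" for a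
    proof (intro ext)
    fix y
    have a1: "(\<Sum>l\<in>{1..p}. if init_val p ZeroOnes (1 - int l) then \<gamma>0 l else (0::real)) = sum \<gamma>0 {1..p} - \<gamma>0 p"
      using A_ZeroOnes(1)[of p \<gamma>0] assms by linarith
    show "outcome_prob p \<beta>0 \<gamma>0 ZeroOnes (x1, x2, x2) a y = OP (x1 \<bullet> \<beta>0 + a) (x2 \<bullet> \<beta>0 + a) (x2 \<bullet> \<beta>0 + a)
     (sum \<gamma>0 {1..p} - \<gamma>0 p) (sum \<gamma>0 {2..p}) (sum \<gamma>0 {3..p}) (\<gamma>0 1) (\<gamma>0 2) y"
      unfolding op_gen2[OF assms] a1 A_ZeroOnes(2,3) fst_conv snd_conv ..
  qed
  have A: "- OP (x1 \<bullet> \<beta>0 + a) (x2 \<bullet> \<beta>0 + a) (x2 \<bullet> \<beta>0 + a) (sum \<gamma>0 {1..p} - \<gamma>0 p) (sum \<gamma>0 {2..p}) (sum \<gamma>0 {3..p}) (\<gamma>0 1) (\<gamma>0 2) (False,True,False) - OP (x1 \<bullet> \<beta>0 + a) (x2 \<bullet> \<beta>0 + a) (x2 \<bullet> \<beta>0 + a) (sum \<gamma>0 {1..p} - \<gamma>0 p) (sum \<gamma>0 {2..p}) (sum \<gamma>0 {3..p}) (\<gamma>0 1) (\<gamma>0 2) (False,True,True)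
    + exp ((x2 \<bullet> \<beta>0 + a) - (x1 \<bullet> \<beta>0 + a) - \<gamma>0 1 + \<gamma> p) * OP (x1 \<bullet> \<beta>0 + a) (x2 \<bullet> \<beta>0 + a) (x2 \<bullet> \<beta>0 + a) (sum \<gamma>0 {1..p} - \<gamma>0 p) (sum \<gamma>0 {2..p}) (sum \<gamma>0 {3..p}) (\<gamma>0 1) (\<gamma>0 2) (True,False,False)
    + exp ((x2 \<bullet> \<beta>0 + a) - (x1 \<bullet> \<beta>0 + a) + \<gamma> p) * OP (x1 \<bullet> \<beta>0 + a) (x2 \<bullet> \<beta>0 + a) (x2 \<bullet> \<beta>0 + a) (sum \<gamma>0 {1..p} - \<gamma>0 p) (sum \<gamma>0 {2..p}) (sum \<gamma>0 {3..p}) (\<gamma>0 1) (\<gamma>0 2) (True,False,True)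
   = exp (x2 \<bullet> \<beta>0 + a + sum \<gamma>0 {2..p}) * lc (x1 \<bullet> \<beta>0 + a + (sum \<gamma>0 {1..p} - \<gamma>0 p)) * lc (x2 \<bullet> \<beta>0 + a + sum \<gamma>0 {2..p})
     * (exp (\<gamma> p - \<gamma>0 p) - 1)"
    by (rule alg_ZeroOnes[OF r1])
  have B: "cond_moment p \<beta>0 \<gamma>0 ZeroOnes \<beta>0 (\<gamma>(1 := \<gamma>0 1)) ((x1, x2, x2), a) = - OP (x1 \<bullet> \<beta>0 + a) (x2 \<bullet> \<beta>0 + a) (x2 \<bullet> \<beta>0 + a) (sum \<gamma>0 {1..p} - \<gamma>0 p) (sum \<gamma>0 {2..p}) (sum \<gamma>0 {3..p}) (\<gamma>0 1) (\<gamma>0 2) (False,True,False) - OP (x1 \<bullet> \<beta>0 + a) (x2 \<bullet> \<beta>0 + a) (x2 \<bullet> \<beta>0 + a) (sum \<gamma>0 {1..p} - \<gamma>0 p) (sum \<gamma>0 {2..p}) (sum \<gamma>0 {3..p}) (\<gamma>0 1) (\<gamma>0 2) (False,True,True)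
    + exp ((x2 \<bullet> \<beta>0 + a) - (x1 \<bullet> \<beta>0 + a) - \<gamma>0 1 + \<gamma> p) * OP (x1 \<bullet> \<beta>0 + a) (x2 \<bullet> \<beta>0 + a) (x2 \<bullet> \<beta>0 + a) (sum \<gamma>0 {1..p} - \<gamma>0 p) (sum \<gamma>0 {2..p}) (sum \<gamma>0 {3..p}) (\<gamma>0 1) (\<gamma>0 2) (True,False,False)
    + exp ((x2 \<bullet> \<beta>0 + a) - (x1 \<bullet> \<beta>0 + a) + \<gamma> p) * OP (x1 \<bullet> \<beta>0 + a) (x2 \<bullet> \<beta>0 + a) (x2 \<bullet> \<beta>0 + a) (sum \<gamma>0 {1..p} - \<gamma>0 p) (sum \<gamma>0 {2..p}) (sum \<gamma>0 {3..p}) (\<gamma>0 1) (\<gamma>0 2) (True,False,True)"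
    unfolding cond_moment_def sumU moment_def init.case m_zero_ones_def fst_conv snd_conv o Let_def d g
    by (simp only: prod.inject simp_thms if_True if_False mult_zero_left mult_1_left add_0_right add_0_left mult_minus1 diff_conv_add_uminus add.assoc)
  show ?thesis using A B by simp
qed

lemma cm_OneZeros:
  assumes "p \<ge> 2"
  shows "cond_moment p \<beta>0 \<gamma>0 OneZeros \<beta>0 (\<gamma>(1 := \<gamma>0 1)) ((x1, x2, x2), a) =
    exp (x1 \<bullet> \<beta>0 + a + \<gamma>0 p) * lc (x1 \<bullet> \<beta>0 + a + \<gamma>0 p) * lc (x2 \<bullet> \<beta>0 + a + \<gamma>0 1)
     * (exp (\<gamma> p - \<gamma>0 p) - 1)"
proof -
  have d: "(x1 - x2) \<bullet> \<beta>0 = (x1 \<bullet> \<beta>0 + a) - (x2 \<bullet> \<beta>0 + a)"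
    by (simp add: inner_diff_left)
  have g: "(\<gamma>(1 := \<gamma>0 1)) 1 = \<gamma>0 1" "(\<gamma>(1 := \<gamma>0 1)) p = \<gamma> p" using assms by auto
  have o: "outcome_prob p \<beta>0 \<gamma>0 OneZeros (x1, x2, x2) a = OP (x1 \<bullet> \<beta>0 + a) (x2 \<bullet> \<beta>0 + a) (x2 \<bullet> \<beta>0 + a)
     (\<gamma>0 p) 0 0 (\<gamma>0 1) (\<gamma>0 2)" for a
    proof (intro ext)
    fix y
    have a1: "(\<Sum>l\<in>{1..p}. if init_val p OneZeros (1 - int l) then \<gamma>0 l else (0::real)) = \<gamma>0 p"
      using A_OneZeros(1)[of p \<gamma>0] assms by linarith
    show "outcome_prob p \<beta>0 \<gamma>0 OneZeros (x1, x2, x2) a y = OP (x1 \<bullet> \<beta>0 + a) (x2 \<bullet> \<beta>0 + a) (x2 \<bullet> \<beta>0 + a)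
     (\<gamma>0 p) 0 0 (\<gamma>0 1) (\<gamma>0 2) y"
      unfolding op_gen2[OF assms] a1 A_OneZeros(2,3) fst_conv snd_conv ..
  qed
  have A: "exp ((x1 \<bullet> \<beta>0 + a) - (x2 \<bullet> \<beta>0 + a) + \<gamma> p) * OP (x1 \<bullet> \<beta>0 + a) (x2 \<bullet> \<beta>0 + a) (x2 \<bullet> \<beta>0 + a) (\<gamma>0 p) 0 0 (\<gamma>0 1) (\<gamma>0 2) (False,True,False)
    + exp ((x1 \<bullet> \<beta>0 + a) - (x2 \<bullet> \<beta>0 + a) - \<gamma>0 1 + \<gamma> p) * OP (x1 \<bullet> \<beta>0 + a) (x2 \<bullet> \<beta>0 + a) (x2 \<bullet> \<beta>0 + a) (\<gamma>0 p) 0 0 (\<gamma>0 1) (\<gamma>0 2) (False,True,True)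
    - OP (x1 \<bullet> \<beta>0 + a) (x2 \<bullet> \<beta>0 + a) (x2 \<bullet> \<beta>0 + a) (\<gamma>0 p) 0 0 (\<gamma>0 1) (\<gamma>0 2) (True,False,False) - OP (x1 \<bullet> \<beta>0 + a) (x2 \<bullet> \<beta>0 + a) (x2 \<bullet> \<beta>0 + a) (\<gamma>0 p) 0 0 (\<gamma>0 1) (\<gamma>0 2) (True,False,True)
   = exp (x1 \<bullet> \<beta>0 + a + \<gamma>0 p) * lc (x1 \<bullet> \<beta>0 + a + \<gamma>0 p) * lc (x2 \<bullet> \<beta>0 + a + \<gamma>0 1)
     * (exp (\<gamma> p - \<gamma>0 p) - 1)"
    by (rule alg_OneZeros)
  have B: "cond_moment p \<beta>0 \<gamma>0 OneZeros \<beta>0 (\<gamma>(1 := \<gamma>0 1)) ((x1, x2, x2), a) = exp ((x1 \<bullet> \<beta>0 + a) - (x2 \<bullet> \<beta>0 + a) + \<gamma> p) * OP (x1 \<bullet> \<beta>0 + a) (x2 \<bullet> \<beta>0 + a) (x2 \<bullet> \<beta>0 + a) (\<gamma>0 p) 0 0 (\<gamma>0 1) (\<gamma>0 2) (False,True,False)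
    + exp ((x1 \<bullet> \<beta>0 + a) - (x2 \<bullet> \<beta>0 + a) - \<gamma>0 1 + \<gamma> p) * OP (x1 \<bullet> \<beta>0 + a) (x2 \<bullet> \<beta>0 + a) (x2 \<bullet> \<beta>0 + a) (\<gamma>0 p) 0 0 (\<gamma>0 1) (\<gamma>0 2) (False,True,True)
    - OP (x1 \<bullet> \<beta>0 + a) (x2 \<bullet> \<beta>0 + a) (x2 \<bullet> \<beta>0 + a) (\<gamma>0 p) 0 0 (\<gamma>0 1) (\<gamma>0 2) (True,False,False) - OP (x1 \<bullet> \<beta>0 + a) (x2 \<bullet> \<beta>0 + a) (x2 \<bullet> \<beta>0 + a) (\<gamma>0 p) 0 0 (\<gamma>0 1) (\<gamma>0 2) (True,False,True)"
    unfolding cond_moment_def sumU moment_def init.case m_one_zeros_def fst_conv snd_conv o Let_def d g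
    by (simp only: prod.inject simp_thms if_True if_False mult_zero_left mult_1_left add_0_right add_0_left mult_minus1 diff_conv_add_uminus add.assoc)
  show ?thesis using A B by simp
qed


lemma set_int_pos:
  fixes f :: "'a \<Rightarrow> real"
  assumes int: "set_integrable M S f" and S: "S \<in> sets M" and pos: "measure M S > 0"
    and ae: "AE x in M. x \<in> S \<longrightarrow> f x > 0"
  shows "set_lebesgue_integral M S f > 0"
proof -
  let ?g = "\<lambda>x. indicator S x *\<^sub>R f x"
  have gi: "integrable M ?g" using int unfolding set_integrable_def .
  have nn: "AE x in M. 0 \<le> ?g x" using ae by eventually_elim (auto simp: indicator_def)
  have ge: "0 \<le> integral\<^sup>L M ?g" by (rule integral_nonneg_AE[OF nn])
  have ne: "integral\<^sup>L M ?g \<noteq> 0"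
  proof
    assume "integral\<^sup>L M ?g = 0"
    then have "AE x in M. ?g x = 0" using integral_nonneg_eq_0_iff_AE[OF gi nn] by simp
    then have "AE x in M. x \<notin> S" using ae by eventually_elim (auto simp: indicator_def)
    then have "S \<in> null_sets M" using AE_iff_null_sets[OF S] by simp
    then have "measure M S = 0" by (simp add: measure_def null_sets_def)
    with pos show False by simp
  qed
  show ?thesis unfolding set_lebesgue_integral_def using ge ne by simp
qed

lemma sign_region_open:
  fixes s :: "'k::finite \<Rightarrow> bool"
  shows "open (sign_region s \<times> (UNIV::real set))"
proof -
  have eq: "sign_region s \<times> (UNIV::real set) = (\<Inter>k\<in>UNIV. {z::'k regr \<times> real. if s k then fst (fst z) $ k < fst (snd (fst z)) $ k
      else fst (snd (fst z)) $ k < fst (fst z) $ k})"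
    unfolding sign_region_def by auto
  show ?thesis unfolding eq
  proof (intro open_INT ballI)
    fix k show "open {z::'k regr \<times> real. if s k then fst (fst z) $ k < fst (snd (fst z)) $ k
      else fst (snd (fst z)) $ k < fst (fst z) $ k}"
      by (cases "s k") (auto intro!: open_Collect_less continuous_intros)
  qed simp
qed

lemma region_sign:
  fixes u :: "real^'k"
  assumes "x \<in> sign_region (\<lambda>k. u $ k < 0)"
  shows "(fst x - fst (snd x)) \<bullet> u \<ge> 0" "u \<noteq> 0 \<Longrightarrow> (fst x - fst (snd x)) \<bullet> u > 0"
proof -
  have t: "\<And>k. ((fst x - fst (snd x)) $ k) * (u $ k) \<ge> 0"
    "\<And>k. u $ k \<noteq> 0 \<Longrightarrow> ((fst x - fst (snd x)) $ k) * (u $ k) > 0"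
  proof -
    fix k
    have h: "if u $ k < 0 then fst x $ k < fst (snd x) $ k else fst x $ k > fst (snd x) $ k"
      using assms unfolding sign_region_def by auto
    show "((fst x - fst (snd x)) $ k) * (u $ k) \<ge> 0"
      using h by (cases "u $ k < 0") (auto intro: mult_neg_neg[THEN less_imp_le] mult_nonneg_nonneg)
  next
    fix k assume "u $ k \<noteq> 0"
    have h: "if u $ k < 0 then fst x $ k < fst (snd x) $ k else fst x $ k > fst (snd x) $ k"
      using assms unfolding sign_region_def by auto
    show "((fst x - fst (snd x)) $ k) * (u $ k) > 0"
      using h \<open>u $ k \<noteq> 0\<close> by (cases "u $ k < 0") (auto intro: mult_neg_neg mult_pos_pos)
  qed
  show "(fst x - fst (snd x)) \<bullet> u \<ge> 0" unfolding inner_vec_def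
    using t(1) by (auto intro: sum_nonneg)
  assume "u \<noteq> 0"
  then obtain k where k: "u $ k \<noteq> 0" by (metis vec_eq_iff zero_index)
  show "(fst x - fst (snd x)) \<bullet> u > 0" unfolding inner_vec_def
    using t k by (intro sum_pos2[where i=k]) auto
qed
lemma set_int_neg:
  fixes f :: "'a \<Rightarrow> real"
  assumes int: "set_integrable M S f" and S: "S \<in> sets M" and pos: "measure M S > 0"
    and ae: "AE x in M. x \<in> S \<longrightarrow> f x < 0"
  shows "set_lebesgue_integral M S f < 0"
proof -
  have i2: "set_integrable M S (\<lambda>x. - f x)" using int unfolding set_integrable_def
    by (simp add: integrable_minus)
  have "set_lebesgue_integral M S (\<lambda>x. - f x) > 0"
    by (rule set_int_pos[OF i2 S pos]) (use ae in auto)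
  then show ?thesis using set_integral_uminus[OF int] by simp
qed

lemma bracket_pos:
  fixes t r r0 al w :: real
  assumes "al > 0" "w \<ge> 0" "t \<ge> 0" "r \<le> r0" "t > 0 \<or> r < r0"
  shows "exp t * (al * exp (- r) + w) - (al * exp (- r0) + w) > 0"
proof -
  have e1: "exp t \<ge> 1" using assms by simp
  have e2: "exp (- r) \<ge> exp (- r0)" using assms by simp
  have A: "al * exp (- r) + w > 0" using assms by (simp add: add_pos_nonneg)
  have m1: "exp t * (al * exp (- r) + w) \<ge> al * exp (- r) + w" using e1 A by simp
  have m2: "al * exp (- r) \<ge> al * exp (- r0)" using e2 assms by simp
  show ?thesis
  proof (cases "t > 0")
    case True
    then have "exp t > 1" by simp
    then have "exp t * (al * exp (- r) + w) > al * exp (- r) + w" using A by simp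
    then show ?thesis using m2 by linarith
  next
    case False
    then have "r < r0" using assms by simp
    then have "exp (- r) > exp (- r0)" by simp
    then have "al * exp (- r) > al * exp (- r0)" using assms by simp
    then show ?thesis using m1 by linarith
  qed
qed

lemma bracket_neg:
  fixes t r r0 al w :: real
  assumes "al > 0" "w \<ge> 0" "t \<le> 0" "r \<ge> r0" "t < 0 \<or> r > r0"
  shows "exp t * (al * exp (- r) + w) - (al * exp (- r0) + w) < 0"
proof -
  have e1: "exp t \<le> 1" using assms by simp
  have e2: "exp (- r) \<le> exp (- r0)" using assms by simp
  have A: "al * exp (- r) + w > 0" using assms by (simp add: add_pos_nonneg)
  have m1: "exp t * (al * exp (- r) + w) \<le> al * exp (- r) + w" using e1 A by simp
  have m2: "al * exp (- r) \<le> al * exp (- r0)" using e2 assms by simp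
  show ?thesis
  proof (cases "t < 0")
    case True
    then have "exp t < 1" by simp
    then have "exp t * (al * exp (- r) + w) < al * exp (- r) + w" using A by simp
    then show ?thesis using m2 by linarith
  next
    case False
    then have "r > r0" using assms by simp
    then have "exp (- r) < exp (- r0)" by simp
    then have "al * exp (- r) < al * exp (- r0)" using assms by simp
    then show ?thesis using m1 by linarith
  qed
qed

lemma part_i:
  fixes \<nu> :: "('k::finite regr \<times> real) measure" and F :: "'k regr \<times> real \<Rightarrow> real" and u0 :: "real^'k"
  assumes sets: "sets \<nu> = sets borel"
    and ae: "AE z in \<nu>. fst (snd (fst z)) = snd (snd (fst z))"
    and pos: "\<forall>s. measure \<nu> (sign_region s \<times> UNIV) > 0"
    and int: "\<forall>s. set_integrable \<nu> (sign_region s \<times> UNIV) F"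
    and rep: "\<And>x1 x2 a. F ((x1,x2,x2),a) = K x1 x2 a * (exp ((x1 - x2) \<bullet> u0) * (al x1 x2 a * exp (- r) + w x1 x2 a)
                 - (al x1 x2 a * exp (- r0) + w x1 x2 a))"
    and Kp: "\<And>x1 x2 a. K x1 x2 a > 0" and alp: "\<And>x1 x2 a. al x1 x2 a > 0" and wp: "\<And>x1 x2 a. w x1 x2 a \<ge> 0"
  shows "(\<forall>s. cond_exp \<nu> (sign_region s \<times> UNIV) F = 0) \<longleftrightarrow> u0 = 0 \<and> r = r0"
proof
  assume eq: "u0 = 0 \<and> r = r0"
  show "\<forall>s. cond_exp \<nu> (sign_region s \<times> UNIV) F = 0"
  proof
    fix s
    have "AE z in \<nu>. indicator (sign_region s \<times> UNIV) z *\<^sub>R F z = 0"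
      using ae
    proof eventually_elim
      case (elim z)
      obtain x1 x2 x3 a where z: "z = ((x1,x2,x3),a)" by (metis prod.collapse)
      then have "x3 = x2" using elim by simp
      then show ?case using z rep eq by simp
    qed
    then have "set_lebesgue_integral \<nu> (sign_region s \<times> UNIV) F = 0"
      unfolding set_lebesgue_integral_def by (rule integral_eq_zero_AE)
    then show "cond_exp \<nu> (sign_region s \<times> UNIV) F = 0" unfolding cond_exp_def by simp
  qed
next
  assume all: "\<forall>s. cond_exp \<nu> (sign_region s \<times> UNIV) F = 0"
  have Sset: "sign_region s \<times> UNIV \<in> sets \<nu>" for s
    unfolding sets using sign_region_open[of s] by simp
  have Fz: "F z = K (fst (fst z)) (fst (snd (fst z))) (snd z) * (exp ((fst (fst z) - fst (snd (fst z))) \<bullet> u0) *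
        (al (fst (fst z)) (fst (snd (fst z))) (snd z) * exp (- r) + w (fst (fst z)) (fst (snd (fst z))) (snd z))
       - (al (fst (fst z)) (fst (snd (fst z))) (snd z) * exp (- r0) + w (fst (fst z)) (fst (snd (fst z))) (snd z)))"
    if "fst (snd (fst z)) = snd (snd (fst z))" for z
  proof -
    obtain x1 x2 x3 a where z: "z = ((x1,x2,x3),a)" by (metis prod.collapse)
    then have "x3 = x2" using that by simp
    then show ?thesis using z rep by simp
  qed
  show "u0 = 0 \<and> r = r0"
  proof (rule ccontr)
    assume ne: "\<not> (u0 = 0 \<and> r = r0)"
    show False
    proof (cases "r \<le> r0")
      case True
      let ?s = "\<lambda>k. u0 $ k < 0"
      have "AE z in \<nu>. z \<in> sign_region ?s \<times> UNIV \<longrightarrow> F z > 0"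
        using ae
      proof eventually_elim
        case (elim z)
        show ?case
        proof
          assume zin: "z \<in> sign_region ?s \<times> UNIV"
          then have xin: "fst z \<in> sign_region ?s" by auto
          have t: "(fst (fst z) - fst (snd (fst z))) \<bullet> u0 \<ge> 0" using region_sign(1)[OF xin] .
          have t2: "(fst (fst z) - fst (snd (fst z))) \<bullet> u0 > 0 \<or> r < r0"
            using region_sign(2)[OF xin] ne True by auto
          show "F z > 0" unfolding Fz[OF elim]
            by (rule mult_pos_pos[OF Kp bracket_pos[OF alp wp t True t2]])
        qed
      qed
      then have "set_lebesgue_integral \<nu> (sign_region ?s \<times> UNIV) F > 0"
        using set_int_pos[OF int[rule_format] Sset pos[rule_format]] by blast
      then have "cond_exp \<nu> (sign_region ?s \<times> UNIV) F > 0"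
        unfolding cond_exp_def using pos by simp
      then show False using all by simp
    next
      case False
      let ?s = "\<lambda>k. (- u0) $ k < 0"
      have "AE z in \<nu>. z \<in> sign_region ?s \<times> UNIV \<longrightarrow> F z < 0"
        using ae
      proof eventually_elim
        case (elim z)
        show ?case
        proof
          assume zin: "z \<in> sign_region ?s \<times> UNIV"
          then have xin: "fst z \<in> sign_region ?s" by auto
          have t: "(fst (fst z) - fst (snd (fst z))) \<bullet> u0 \<le> 0" using region_sign(1)[OF xin] by simp
          have r1: "r \<ge> r0" "r > r0" using False by auto
          show "F z < 0" unfolding Fz[OF elim]
            by (rule mult_pos_neg[OF Kp bracket_neg[OF alp wp t r1(1)]]) (use r1 in auto)
        qed
      qed
      then have "set_lebesgue_integral \<nu> (sign_region ?s \<times> UNIV) F < 0"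
        using set_int_neg[OF int[rule_format] Sset pos[rule_format]] by blast
      then have "cond_exp \<nu> (sign_region ?s \<times> UNIV) F < 0"
        unfolding cond_exp_def using pos by (simp add: divide_neg_pos)
      then show False using all by simp
    qed
  qed
qed

lemma part_ii:
  fixes \<nu> :: "('k::finite regr \<times> real) measure" and F :: "'k regr \<times> real \<Rightarrow> real"
  assumes ps: "prob_space \<nu>" and sets: "sets \<nu> = sets borel"
    and ae: "AE z in \<nu>. fst (snd (fst z)) = snd (snd (fst z))"
    and int: "integrable \<nu> F"
    and rep: "\<And>x1 x2 a. F ((x1,x2,x2),a) = K x1 x2 a * (exp t - 1)"
    and Kp: "\<And>x1 x2 a. K x1 x2 a > 0"
  shows "cond_exp \<nu> UNIV F = 0 \<longleftrightarrow> t = 0"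
proof -
  have sp: "space \<nu> = UNIV" using sets_eq_imp_space_eq[OF sets] by simp
  have m1: "measure \<nu> UNIV = 1" using prob_space.prob_space[OF ps] sp by simp
  have U: "UNIV \<in> sets \<nu>" using sets.top[of \<nu>] sp by simp
  have si: "set_integrable \<nu> UNIV F" using int unfolding set_integrable_def by simp
  have Fz: "F z = K (fst (fst z)) (fst (snd (fst z))) (snd z) * (exp t - 1)"
    if "fst (snd (fst z)) = snd (snd (fst z))" for z
  proof -
    obtain x1 x2 x3 a where z: "z = ((x1,x2,x3),a)" by (metis prod.collapse)
    then have "x3 = x2" using that by simp
    then show ?thesis using z rep by simp
  qed
  show ?thesis
  proof
    assume c: "cond_exp \<nu> UNIV F = 0"
    show "t = 0"
    proof (rule ccontr)
      assume "t \<noteq> 0"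
      then consider "t > 0" | "t < 0" by linarith
      then show False
      proof cases
        case 1
        have ae1: "AE z in \<nu>. z \<in> UNIV \<longrightarrow> F z > 0" using ae
          by eventually_elim (use 1 Kp Fz in auto)
        have "set_lebesgue_integral \<nu> UNIV F > 0" using set_int_pos[OF si U _ ae1] m1 by simp
        then show False using c m1 unfolding cond_exp_def by simp
      next
        case 2
        have ae1: "AE z in \<nu>. z \<in> UNIV \<longrightarrow> F z < 0" using ae
          by eventually_elim (use 2 Kp Fz in \<open>auto intro!: mult_pos_neg\<close>)
        have "set_lebesgue_integral \<nu> UNIV F < 0" using set_int_neg[OF si U _ ae1] m1 by simp
        then show False using c m1 unfolding cond_exp_def by simp
      qed
    qed
  next
    assume t: "t = 0"
    have "AE z in \<nu>. indicator UNIV z *\<^sub>R F z = 0" using ae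
      by eventually_elim (use t Fz in auto)
    then have "set_lebesgue_integral \<nu> UNIV F = 0"
      unfolding set_lebesgue_integral_def by (rule integral_eq_zero_AE)
    then show "cond_exp \<nu> UNIV F = 0" unfolding cond_exp_def by simp
  qed
qed

theorem theorem2:
  fixes p :: nat and \<beta>0 :: "real^'k" and \<gamma>0 :: "nat \<Rightarrow> real"
  assumes "p \<ge> 2"
  shows
   "(\<forall>i \<in> {Zeros, Ones}. \<forall>\<nu> :: ('k regr \<times> real) measure.
       prob_space \<nu> \<and> sets \<nu> = sets borel
       \<and> (AE z in \<nu>. fst (snd (fst z)) = snd (snd (fst z)))
       \<and> (\<forall>s. measure \<nu> (sign_region s \<times> UNIV) > 0) \<longrightarrow>
       (\<forall>\<beta> \<gamma>. (\<forall>s. set_integrable \<nu> (sign_region s \<times> UNIV) (cond_moment p \<beta>0 \<gamma>0 i \<beta> \<gamma>)) \<longrightarrow>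
          ((\<forall>s. cond_exp \<nu> (sign_region s \<times> UNIV) (cond_moment p \<beta>0 \<gamma>0 i \<beta> \<gamma>) = 0)
             \<longleftrightarrow> \<beta> = \<beta>0 \<and> \<gamma> 1 = \<gamma>0 1)))
  \<and> (\<forall>i \<in> {ZeroOnes, OneZeros}. \<forall>\<nu> :: ('k regr \<times> real) measure.
       prob_space \<nu> \<and> sets \<nu> = sets borel
       \<and> (AE z in \<nu>. fst (snd (fst z)) = snd (snd (fst z))) \<longrightarrow>
       (\<forall>\<gamma>. integrable \<nu> (cond_moment p \<beta>0 \<gamma>0 i \<beta>0 (\<gamma>(1 := \<gamma>0 1))) \<longrightarrow>
          (cond_exp \<nu> UNIV (cond_moment p \<beta>0 \<gamma>0 i \<beta>0 (\<gamma>(1 := \<gamma>0 1))) = 0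
             \<longleftrightarrow> \<gamma> p = \<gamma>0 p)))"
  proof (intro conjI ballI allI impI)
  have p: "p \<ge> 2" by (rule assms)
  fix i :: init and \<nu> :: "('k regr \<times> real) measure" and \<beta> :: "real^'k" and \<gamma> :: "nat \<Rightarrow> real"
  assume i: "i \<in> {Zeros, Ones}"
    and H: "prob_space \<nu> \<and> sets \<nu> = sets borel \<and> (AE z in \<nu>. fst (snd (fst z)) = snd (snd (fst z)))
       \<and> (\<forall>s. measure \<nu> (sign_region s \<times> UNIV) > 0)"
    and I: "\<forall>s. set_integrable \<nu> (sign_region s \<times> UNIV) (cond_moment p \<beta>0 \<gamma>0 i \<beta> \<gamma>)"
  from i consider "i = Zeros" | "i = Ones" by blast
  then show "(\<forall>s. cond_exp \<nu> (sign_region s \<times> UNIV) (cond_moment p \<beta>0 \<gamma>0 i \<beta> \<gamma>) = 0) \<longleftrightarrow> \<beta> = \<beta>0 \<and> \<gamma> 1 = \<gamma>0 1"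
  proof cases
    case 1
    have "(\<forall>s. cond_exp \<nu> (sign_region s \<times> UNIV) (cond_moment p \<beta>0 \<gamma>0 Zeros \<beta> \<gamma>) = 0) \<longleftrightarrow> \<beta> - \<beta>0 = 0 \<and> \<gamma> 1 = \<gamma>0 1"
      apply (rule part_i[where K="\<lambda>x1 x2 a. exp (x1 \<bullet> \<beta>0 + a) * lc (x1 \<bullet> \<beta>0 + a) * lc (x2 \<bullet> \<beta>0 + a) * lc (x2 \<bullet> \<beta>0 + a + \<gamma>0 1)"
            and al="\<lambda>x1 x2 a. exp (x2 \<bullet> \<beta>0 + a + \<gamma>0 1)" and w="\<lambda>x1 x2 a. 1"])
      using H I 1 by (auto simp: cm_Zeros[OF p] lc_pos)
    then show ?thesis using 1 by simp
  next
    case 2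
    have eqv: "(x2 - x1) \<bullet> (\<beta> - \<beta>0) = (x1 - x2) \<bullet> (\<beta>0 - \<beta>)" for x1 x2 :: "real^'k"
      by (simp add: inner_diff_left inner_diff_right)
    have "(\<forall>s. cond_exp \<nu> (sign_region s \<times> UNIV) (cond_moment p \<beta>0 \<gamma>0 Ones \<beta> \<gamma>) = 0) \<longleftrightarrow> \<beta>0 - \<beta> = 0 \<and> \<gamma> 1 = \<gamma>0 1"
      apply (rule part_i[where K="\<lambda>x1 x2 a. exp (x2 \<bullet> \<beta>0 + a + sum \<gamma>0 {1..p}) * lc (x1 \<bullet> \<beta>0 + a + sum \<gamma>0 {1..p}) * lc (x2 \<bullet> \<beta>0 + a + sum \<gamma>0 {2..p})
    * lc (x2 \<bullet> \<beta>0 + a + sum \<gamma>0 {1..p})"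
            and al="\<lambda>x1 x2 a. 1" and w="\<lambda>x1 x2 a. exp (x2 \<bullet> \<beta>0 + a + sum \<gamma>0 {2..p})"])
      using H I 2 by (auto simp: cm_Ones[OF p] eqv lc_pos)
    then show ?thesis using 2 by auto
  qed
next
  have p: "p \<ge> 2" by (rule assms)
  fix i :: init and \<nu> :: "('k regr \<times> real) measure" and \<gamma> :: "nat \<Rightarrow> real"
  assume i: "i \<in> {ZeroOnes, OneZeros}"
    and H: "prob_space \<nu> \<and> sets \<nu> = sets borel \<and> (AE z in \<nu>. fst (snd (fst z)) = snd (snd (fst z)))"
    and I: "integrable \<nu> (cond_moment p \<beta>0 \<gamma>0 i \<beta>0 (\<gamma>(1 := \<gamma>0 1)))"
  from i consider "i = ZeroOnes" | "i = OneZeros" by blast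
  then show "cond_exp \<nu> UNIV (cond_moment p \<beta>0 \<gamma>0 i \<beta>0 (\<gamma>(1 := \<gamma>0 1))) = 0 \<longleftrightarrow> \<gamma> p = \<gamma>0 p"
  proof cases
    case 1
    have "cond_exp \<nu> UNIV (cond_moment p \<beta>0 \<gamma>0 ZeroOnes \<beta>0 (\<gamma>(1 := \<gamma>0 1))) = 0 \<longleftrightarrow> \<gamma> p - \<gamma>0 p = 0"
      (is "?L \<longleftrightarrow> _")
    proof -
      have rep: "\<And>x1 x2 a. cond_moment p \<beta>0 \<gamma>0 ZeroOnes \<beta>0 (\<gamma>(1 := \<gamma>0 1)) ((x1, x2, x2), a) = exp (x2 \<bullet> \<beta>0 + a + sum \<gamma>0 {2..p}) * lc (x1 \<bullet> \<beta>0 + a + (sum \<gamma>0 {1..p} - \<gamma>0 p)) * lc (x2 \<bullet> \<beta>0 + a + sum \<gamma>0 {2..p}) * (exp (\<gamma> p - \<gamma>0 p) - 1)"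
        by (rule cm_ZeroOnes[OF p])
      have Kp: "\<And>x1 x2 (a::real). exp (x2 \<bullet> \<beta>0 + a + sum \<gamma>0 {2..p}) * lc (x1 \<bullet> \<beta>0 + a + (sum \<gamma>0 {1..p} - \<gamma>0 p)) * lc (x2 \<bullet> \<beta>0 + a + sum \<gamma>0 {2..p}) > 0"
        by (intro mult_pos_pos exp_gt_zero lc_pos)
      have ps: "prob_space \<nu>" "sets \<nu> = sets borel" "AE z in \<nu>. fst (snd (fst z)) = snd (snd (fst z))"
        using H by auto
      have ii: "integrable \<nu> (cond_moment p \<beta>0 \<gamma>0 ZeroOnes \<beta>0 (\<gamma>(1 := \<gamma>0 1)))" using I 1 by simp
      show ?thesis by (rule part_ii[OF ps ii rep Kp])
    qed
    then show ?thesis using 1 by simp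
  next
    case 2
    have "cond_exp \<nu> UNIV (cond_moment p \<beta>0 \<gamma>0 OneZeros \<beta>0 (\<gamma>(1 := \<gamma>0 1))) = 0 \<longleftrightarrow> \<gamma> p - \<gamma>0 p = 0"
      (is "?L \<longleftrightarrow> _")
    proof -
      have rep: "\<And>x1 x2 a. cond_moment p \<beta>0 \<gamma>0 OneZeros \<beta>0 (\<gamma>(1 := \<gamma>0 1)) ((x1, x2, x2), a) = exp (x1 \<bullet> \<beta>0 + a + \<gamma>0 p) * lc (x1 \<bullet> \<beta>0 + a + \<gamma>0 p) * lc (x2 \<bullet> \<beta>0 + a + \<gamma>0 1) * (exp (\<gamma> p - \<gamma>0 p) - 1)"
        by (rule cm_OneZeros[OF p])
      have Kp: "\<And>x1 x2 (a::real). exp (x1 \<bullet> \<beta>0 + a + \<gamma>0 p) * lc (x1 \<bullet> \<beta>0 + a + \<gamma>0 p) * lc (x2 \<bullet> \<beta>0 + a + \<gamma>0 1) > 0"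
        by (intro mult_pos_pos exp_gt_zero lc_pos)
      have ps: "prob_space \<nu>" "sets \<nu> = sets borel" "AE z in \<nu>. fst (snd (fst z)) = snd (snd (fst z))"
        using H by auto
      have ii: "integrable \<nu> (cond_moment p \<beta>0 \<gamma>0 OneZeros \<beta>0 (\<gamma>(1 := \<gamma>0 1)))" using I 2 by simp
      show ?thesis by (rule part_ii[OF ps ii rep Kp])
    qed
    then show ?thesis using 2 by simp
  qed
qed

end
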